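(* Let $a_0\in\mathbb R$, $\delta>0$, and let $b:(a_0,a_0+\delta)\to\mathbb R$ be a function whose range $\{b(a):a\in(a_0,a_0+\delta)\}$ has positive Lebesgue measure. Then for every $s>0$ and every $1\le p<\infty$, $$\sup\Big\{\frac{\|L_*f\|_{L^p(\mathbb R)}}{\|f\|_{H^s(\mathbb R)}}:\ f\in H^s(\mathbb R),\ \hat f\in L^1(\mathbb R),\ f\neq0\Big\}=+\infty.$$
   Context: For $f$ with $\hat f\in L^1(\mathbb R)$, $L_af(u)=\frac1{\sqrt{2\pi}}\int_{\mathbb R}e^{i[b(a)uv+av^2]}\hat f(v)\,dv$ (absolutely convergent), where $\hat f(v)=\frac1{\sqrt{2\pi}}\int e^{-ivt}f(t)dt$, and $L_*f(u)=\sup_{a\in(a_0,a_0+\delta)}|L_af(u)|$. $H^s(\mathbb R)$ has norm $\|f\|_{H^s}=\big(\int|\hat f(\xi)|^2(1+\xi^2)^sd\xi\big)^{1/2}$. *)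

theory Defs
  imports "HOL-Analysis.Analysis"
begin

text \<open>Functions f are represented through their Fourier transform g = hat f.
  All quantities in the statement (L_a f, L_* f, the H^s norm) depend on f only via hat f.\<close>

definition La :: "(real \<Rightarrow> real) \<Rightarrow> real \<Rightarrow> (real \<Rightarrow> complex) \<Rightarrow> real \<Rightarrow> complex" where
  "La b a g u = complex_of_real (1 / sqrt (2 * pi)) *
     integral\<^sup>L lborel (\<lambda>v. exp (\<i> * complex_of_real (b a * u * v + a * v^2)) * g v)"

definition Lstar :: "real \<Rightarrow> real \<Rightarrow> (real \<Rightarrow> real) \<Rightarrow> (real \<Rightarrow> complex) \<Rightarrow> real \<Rightarrow> ennreal" where
  "Lstar a0 \<delta> b g u = (SUP a\<in>{a0<..<a0+\<delta>}. ennreal (cmod (La b a g u)))"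

definition enn_powr :: "ennreal \<Rightarrow> real \<Rightarrow> ennreal" where
  "enn_powr x p = (if x = \<infinity> then \<infinity> else ennreal (enn2real x powr p))"

definition Lp_norm :: "real \<Rightarrow> (real \<Rightarrow> ennreal) \<Rightarrow> ennreal" where
  "Lp_norm p h = enn_powr (\<integral>\<^sup>+ x. enn_powr (h x) p \<partial>lborel) (1 / p)"

definition Hs_norm :: "real \<Rightarrow> (real \<Rightarrow> complex) \<Rightarrow> real" where
  "Hs_norm s g = sqrt (\<integral>\<xi>. (cmod (g \<xi>))^2 * (1 + \<xi>^2) powr s \<partial>lborel)"

definition admissible :: "real \<Rightarrow> (real \<Rightarrow> complex) \<Rightarrow> bool" where
  "admissible s g \<longleftrightarrow> g \<in> borel_measurable lborel \<and> integrable lborel g \<and>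
     integrable lborel (\<lambda>\<xi>. (cmod (g \<xi>))^2 * (1 + \<xi>^2) powr s)"

end

theory Submission imports Defs begin

definition gT :: "real \<Rightarrow> real \<Rightarrow> real \<Rightarrow> real \<Rightarrow> complex" where
  "gT \<eta> a0 T v = indicator {0..\<eta>} v *\<^sub>R exp (\<i> * complex_of_real (-(a0* v^2 + T* v)))"

lemma gT_integrable: "integrable lborel (\<lambda>v. exp (\<i> * complex_of_real (c* v + d* v^2)) * gT \<eta> a0 T v)"
proof -
  have "(\<lambda>v. exp (\<i> * complex_of_real (c* v + d* v^2)) * gT \<eta> a0 T v) =
     (\<lambda>v. indicator {0..\<eta>} v *\<^sub>R (exp (\<i> * complex_of_real (c* v + d* v^2)) * exp (\<i> * complex_of_real (-(a0* v^2 + T* v)))))"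
    by (auto simp: gT_def fun_eq_iff)
  moreover have "integrable lborel \<dots>"
    by (rule borel_integrable_compact) (auto intro!: continuous_intros)
  ultimately show ?thesis by simp
qed

lemma cos_half: fixes x :: real assumes "\<bar>x\<bar> \<le> 5/8" shows "1/2 \<le> cos x"
proof -
  have "cos (pi/3) \<le> cos \<bar>x\<bar>"
    using assms pi_gt3 by (intro cos_monotone_0_pi_le) auto
  then show ?thesis by (simp add: cos_60)
qed

lemma La_lower:
  fixes \<eta> \<delta> a0 a u T :: real and b :: "real \<Rightarrow> real"
  assumes "0<\<eta>" "\<eta>\<le>1" "\<delta>*\<eta>^2 \<le> 1/8" "a0<a" "a<a0+\<delta>" "\<bar>b a * u - T\<bar> < 1/2"
  shows "\<eta>/(2* sqrt(2*pi)) \<le> cmod (La b a (gT \<eta> a0 T) u)"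
proof -
  define c where "c = b a * u - T"
  define \<theta> where "\<theta> v = c* v + (a-a0)* v^2" for v
  have eq: "(\<lambda>v. exp (\<i> * complex_of_real (b a * u * v + a * v^2)) * gT \<eta> a0 T v) =
        (\<lambda>v. indicator {0..\<eta>} v *\<^sub>R exp (\<i> * complex_of_real (\<theta> v)))"
  proof
    fix v
    have "exp (\<i> * complex_of_real (b a * u * v + a * v^2)) * exp (\<i> * complex_of_real (-(a0* v^2 + T* v)))
        = exp (\<i> * complex_of_real (b a * u * v + a * v^2) + \<i> * complex_of_real (-(a0* v^2 + T* v)))"
      by (simp add: exp_add)
    also have "\<i> * complex_of_real (b a * u * v + a * v^2) + \<i> * complex_of_real (-(a0* v^2 + T* v))
       = \<i> * complex_of_real (\<theta> v)"
      by (simp add: \<theta>_def c_def algebra_simps)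
    finally show "exp (\<i> * complex_of_real (b a * u * v + a * v^2)) * gT \<eta> a0 T v =
        indicator {0..\<eta>} v *\<^sub>R exp (\<i> * complex_of_real (\<theta> v))"
      by (simp add: gT_def)
  qed
  have int: "integrable lborel (\<lambda>v. indicator {0..\<eta>} v *\<^sub>R exp (\<i> * complex_of_real (\<theta> v)))"
    unfolding \<theta>_def by (rule borel_integrable_compact) (auto intro!: continuous_intros)
  have int2: "integrable lborel (\<lambda>v. indicator {0..\<eta>} v *\<^sub>R cos (\<theta> v))"
    unfolding \<theta>_def by (rule borel_integrable_compact) (auto intro!: continuous_intros)
  have int3: "integrable lborel (\<lambda>v. indicator {0..\<eta>} v *\<^sub>R (1/2::real))"
    by (rule borel_integrable_compact) (auto intro!: continuous_intros)
  have pw: "indicator {0..\<eta>} v *\<^sub>R (1/2::real) \<le> indicator {0..\<eta>} v *\<^sub>R cos (\<theta> v)" for v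
  proof (cases "v \<in> {0..\<eta>}")
    case True
    have "\<bar>c* v\<bar> \<le> 1/2"
    proof -
      have "\<bar>c* v\<bar> = \<bar>c\<bar>* v" using True by (simp add: abs_mult)
      also have "\<dots> \<le> (1/2)*1" using True assms c_def by (intro mult_mono) auto
      finally show ?thesis by simp
    qed
    moreover have "\<bar>(a-a0)* v^2\<bar> \<le> 1/8"
    proof -
      have "\<bar>(a-a0)* v^2\<bar> = (a-a0)* v^2" using assms by simp
      also have "\<dots> \<le> \<delta>*\<eta>^2" using True assms by (intro mult_mono power_mono) auto
      finally show ?thesis using assms by simp
    qed
    ultimately have "\<bar>\<theta> v\<bar> \<le> 5/8" unfolding \<theta>_def by linarith
    then show ?thesis using True cos_half by simp
  qed simp
  have "\<eta>/2 = integral\<^sup>L lborel (\<lambda>v. indicator {0..\<eta>} v *\<^sub>R (1/2::real))"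
    using assms by simp
  also have "\<dots> \<le> integral\<^sup>L lborel (\<lambda>v. indicator {0..\<eta>} v *\<^sub>R cos (\<theta> v))"
    by (intro integral_mono int2 int3 pw)
  also have "\<dots> = Re (integral\<^sup>L lborel (\<lambda>v. indicator {0..\<eta>} v *\<^sub>R exp (\<i> * complex_of_real (\<theta> v))))"
    using integral_Re[OF int] by (simp add: Re_exp)
  also have "\<dots> \<le> cmod (integral\<^sup>L lborel (\<lambda>v. indicator {0..\<eta>} v *\<^sub>R exp (\<i> * complex_of_real (\<theta> v))))"
    by (rule complex_Re_le_cmod)
  finally have *: "\<eta>/2 \<le> cmod (integral\<^sup>L lborel (\<lambda>v. exp (\<i> * complex_of_real (b a * u * v + a * v^2)) * gT \<eta> a0 T v))"
    unfolding eq .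
  have "cmod (La b a (gT \<eta> a0 T) u) = (1/sqrt(2*pi)) * cmod (integral\<^sup>L lborel (\<lambda>v. exp (\<i> * complex_of_real (b a * u * v + a * v^2)) * gT \<eta> a0 T v))"
    unfolding La_def norm_mult norm_of_real by simp
  moreover have "\<eta>/(2* sqrt(2*pi)) = (1/sqrt(2*pi)) * (\<eta>/2)" by simp
  ultimately show ?thesis using * by (simp only:) (rule mult_left_mono, auto)
qed


lemma enn_powr_ge:
  assumes "ennreal X \<le> Y" "0 \<le> X" "0 < p"
  shows "ennreal (X powr p) \<le> enn_powr Y p"
proof (cases "Y = \<infinity>")
  case True then show ?thesis by (simp add: enn_powr_def)
next
  case False
  have "enn2real (ennreal X) \<le> enn2real Y" using assms(1) False
    by (intro enn2real_mono) (auto simp: top.not_eq_extremum)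
  then have "X \<le> enn2real Y" using assms(2) by simp
  then have "X powr p \<le> enn2real Y powr p" using assms by (intro powr_mono2) auto
  then show ?thesis using False by (simp add: enn_powr_def)
qed

lemma gT_admissible:
  fixes s \<eta> a0 T :: real
  assumes "0 < \<eta>" "0 \<le> s"
  shows "admissible s (gT \<eta> a0 T)"
    and "Hs_norm s (gT \<eta> a0 T) = sqrt (\<integral>\<xi>. indicator {0..\<eta>} \<xi> *\<^sub>R (1 + \<xi>^2) powr s \<partial>lborel)"
    and "Hs_norm s (gT \<eta> a0 T) > 0"
proof -
  have i1: "integrable lborel (gT \<eta> a0 T)"
    unfolding gT_def by (rule borel_integrable_compact) (auto intro!: continuous_intros)
  have eq: "(\<lambda>\<xi>. (cmod (gT \<eta> a0 T \<xi>))^2 * (1 + \<xi>^2) powr s) = (\<lambda>\<xi>. indicator {0..\<eta>} \<xi> *\<^sub>R (1 + \<xi>^2) powr s)"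
    by (simp add: gT_def fun_eq_iff indicator_def norm_exp_i_times)
  have nz: "\<And>x::real. 1 + x^2 \<noteq> 0" by (smt (verit) zero_le_power2)
  have i2: "integrable lborel (\<lambda>\<xi>. indicator {0..\<eta>} \<xi> *\<^sub>R (1 + \<xi>^2) powr s :: real)"
    using nz by (intro borel_integrable_compact) (auto intro!: continuous_intros)
  show "admissible s (gT \<eta> a0 T)"
    unfolding admissible_def eq using i1 i2 by auto
  show hs: "Hs_norm s (gT \<eta> a0 T) = sqrt (\<integral>\<xi>. indicator {0..\<eta>} \<xi> *\<^sub>R (1 + \<xi>^2) powr s \<partial>lborel)"
    unfolding Hs_norm_def eq ..
  have i3: "integrable lborel (\<lambda>\<xi>. indicator {0..\<eta>} \<xi> *\<^sub>R (1::real))"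
    by (rule borel_integrable_compact) (auto intro!: continuous_intros)
  have "0 < \<eta>" by fact
  also have "\<eta> = (\<integral>\<xi>. indicator {0..\<eta>} \<xi> *\<^sub>R (1::real) \<partial>lborel)" using assms by simp
  also have "\<dots> \<le> (\<integral>\<xi>. indicator {0..\<eta>} \<xi> *\<^sub>R (1 + \<xi>^2) powr s \<partial>lborel)"
    using assms zero_le_power2 by (intro integral_mono i2 i3) (auto simp: indicator_def intro!: ge_one_powr_ge_zero; smt (verit) zero_le_power2)
  finally show "Hs_norm s (gT \<eta> a0 T) > 0" unfolding hs by simp
qed


lemma big_bounded:
  fixes B :: "real set"
  assumes "emeasure lebesgue B > 0"
  obtains M where "M > 0" "infinite (B \<inter> {-M..M} - {0})"
proof (rule ccontr)
  assume "\<not> thesis"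
  with that have fin: "finite (B \<inter> {-real (Suc n)..real (Suc n)} - {0})" for n
    by (metis of_nat_0_less_iff zero_less_Suc)
  have "B \<subseteq> insert 0 (\<Union>n. B \<inter> {-real (Suc n)..real (Suc n)} - {0})"
  proof
    fix x assume "x \<in> B"
    have "\<bar>x\<bar> \<le> real (Suc (nat \<lceil>\<bar>x\<bar>\<rceil>))" by linarith
    then show "x \<in> insert 0 (\<Union>n. B \<inter> {-real (Suc n)..real (Suc n)} - {0})"
      using \<open>x \<in> B\<close> by (cases "x = 0") (auto intro!: exI[of _ "nat \<lceil>\<bar>x\<bar>\<rceil>"] simp del: of_nat_Suc)
  qed
  moreover have "countable (insert 0 (\<Union>n. B \<inter> {-real (Suc n)..real (Suc n)} - {0}))"
    using fin by (intro countable_insert countable_UN) (auto intro: countable_finite)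
  ultimately have "countable B" by (rule countable_subset)
  then have "B \<in> null_sets lborel" by (rule countable_imp_null_set_lborel)
  then have "B \<in> null_sets lebesgue" by (rule null_sets_completionI)
  with assms show False by auto
qed


theorem proposition4:
  fixes a0 \<delta> s p :: real and b :: "real \<Rightarrow> real"
  assumes "\<delta> > 0"
    and "b ` {a0<..<a0+\<delta>} \<in> sets lebesgue"
    and "emeasure lebesgue (b ` {a0<..<a0+\<delta>}) > 0"
    and "s > 0" and "1 \<le> p"
  shows "(SUP g\<in>{g. admissible s g \<and> Hs_norm s g \<noteq> 0}.
            Lp_norm p (Lstar a0 \<delta> b g) / ennreal (Hs_norm s g)) = \<infinity>"
proof -
  define B where "B = b ` {a0<..<a0+\<delta>}"
  define \<eta> where "\<eta> = 1 / (1 + 2 * \<delta>)"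
  have \<eta>0: "0 < \<eta>" and \<eta>1: "\<eta> \<le> 1" using assms unfolding \<eta>_def by auto
  have \<eta>2: "\<delta> * \<eta>^2 \<le> 1/8"
  proof -
    have e: "(1 + 2 * \<delta>)^2 - 8 * \<delta> = (1 - 2 * \<delta>)^2" by (simp add: power2_eq_square algebra_simps)
    have "8 * \<delta> \<le> (1 + 2 * \<delta>)^2" using e zero_le_power2[of "1 - 2 * \<delta>"] by linarith
    then show ?thesis using assms unfolding \<eta>_def by (simp add: field_simps power_divide)
  qed
  define c0 where "c0 = \<eta> / (2 * sqrt (2 * pi))"
  have c0: "0 < c0" using \<eta>0 unfolding c0_def by simp
  define H where "H = sqrt (\<integral>\<xi>. indicator {0..\<eta>} \<xi> *\<^sub>R (1 + \<xi>^2) powr s \<partial>lborel)"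
  have HT: "Hs_norm s (gT \<eta> a0 T) = H" for T using gT_admissible(2)[OF \<eta>0, of s] assms unfolding H_def by simp
  have H0: "0 < H" using gT_admissible(3)[OF \<eta>0, of s a0 0] assms HT by simp
  obtain M where M: "M > 0" "infinite (B \<inter> {-M..M} - {0})"
    using big_bounded assms(3) unfolding B_def by blast
  show ?thesis
    unfolding infinity_ennreal_def
  proof (rule ennreal_SUP_eq_top)
    fix n :: nat
    define k where "k = nat \<lceil>(real n * H) powr p * M / c0 powr p\<rceil>"
    obtain F where F: "finite F" "card F = k" "F \<subseteq> B \<inter> {-M..M} - {0}"
      using infinite_arbitrarily_large[OF M(2)] by blast
    have "\<forall>\<^sub>F T in at_top. (0::real) \<le> T \<and> (\<forall>\<beta>\<in>F. \<forall>\<gamma>\<in>F. \<beta> \<noteq> \<gamma> \<longrightarrow> M \<le> T * \<bar>\<gamma> - \<beta>\<bar>)"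
    proof (intro eventually_conj eventually_ball_finite F(1) ballI)
      show "\<forall>\<^sub>F T in at_top. (0::real) \<le> T" by (rule eventually_ge_at_top)
      fix \<beta> \<gamma> assume "\<beta> \<in> F" "\<gamma> \<in> F"
      show "\<forall>\<^sub>F T in at_top. \<beta> \<noteq> \<gamma> \<longrightarrow> M \<le> T * \<bar>\<gamma> - \<beta>\<bar>"
      proof (cases "\<beta> = \<gamma>")
        case False
        then show ?thesis
          using eventually_ge_at_top[of "M / \<bar>\<gamma> - \<beta>\<bar>"]
        proof eventually_elim
          case (elim x)
          have "0 < \<bar>\<gamma> - \<beta>\<bar>" using False by simp
          then show ?case using elim by (simp add: pos_divide_le_eq)
        qed
      qed simp
    qed
    then obtain T where T: "0 \<le> T" "\<And>\<beta> \<gamma>. \<beta> \<in> F \<Longrightarrow> \<gamma> \<in> F \<Longrightarrow> \<beta> \<noteq> \<gamma> \<Longrightarrow> M \<le> T * \<bar>\<gamma> - \<beta>\<bar>"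
      unfolding eventually_at_top_linorder by blast
    define J where "J \<beta> = {T/\<beta> - 1/(2*\<bar>\<beta>\<bar>) <..< T/\<beta> + 1/(2*\<bar>\<beta>\<bar>)}" for \<beta>
    define S where "S = (\<Union>\<beta>\<in>F. J \<beta>)"
    have Fne: "\<beta> \<in> F \<Longrightarrow> \<beta> \<noteq> 0 \<and> \<bar>\<beta>\<bar> \<le> M \<and> \<beta> \<in> B" for \<beta> using F(3) by (auto simp: abs_le_iff)
    have disj: "disjoint_family_on J F"
    unfolding disjoint_family_on_def
    proof (intro ballI impI, rule ccontr)
      fix \<beta> \<gamma> assume bg: "\<beta> \<in> F" "\<gamma> \<in> F" "\<beta> \<noteq> \<gamma>" "J \<beta> \<inter> J \<gamma> \<noteq> {}"
      then obtain x where x: "x \<in> J \<beta>" "x \<in> J \<gamma>" by blast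
      have "\<bar>T/\<beta> - T/\<gamma>\<bar> < 1/(2*\<bar>\<beta>\<bar>) + 1/(2*\<bar>\<gamma>\<bar>)"
        using x unfolding J_def by auto
      then have "\<bar>\<beta>\<bar> * \<bar>\<gamma>\<bar> * \<bar>T/\<beta> - T/\<gamma>\<bar> < \<bar>\<beta>\<bar> * \<bar>\<gamma>\<bar> * (1/(2*\<bar>\<beta>\<bar>) + 1/(2*\<bar>\<gamma>\<bar>))"
        using Fne bg by (intro mult_strict_left_mono) auto
      moreover have "\<bar>\<beta>\<bar> * \<bar>\<gamma>\<bar> * \<bar>T/\<beta> - T/\<gamma>\<bar> = T * \<bar>\<gamma> - \<beta>\<bar>"
      proof -
        have "\<beta> * \<gamma> * (T/\<beta> - T/\<gamma>) = T * (\<gamma> - \<beta>)" using Fne bg by (simp add: field_simps)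
        then have "\<bar>\<beta>\<bar> * \<bar>\<gamma>\<bar> * \<bar>T/\<beta> - T/\<gamma>\<bar> = \<bar>T * (\<gamma> - \<beta>)\<bar>" by (metis abs_mult)
        then show ?thesis using T(1) by (simp add: abs_mult)
      qed
      moreover have "\<bar>\<beta>\<bar> * \<bar>\<gamma>\<bar> * (1/(2*\<bar>\<beta>\<bar>) + 1/(2*\<bar>\<gamma>\<bar>)) = (\<bar>\<beta>\<bar> + \<bar>\<gamma>\<bar>)/2"
        using Fne bg by (simp add: field_simps)
      ultimately have A: "T * \<bar>\<gamma> - \<beta>\<bar> < (\<bar>\<beta>\<bar> + \<bar>\<gamma>\<bar>)/2" by simp
      have "(\<bar>\<beta>\<bar> + \<bar>\<gamma>\<bar>)/2 \<le> M" using Fne[OF bg(1)] Fne[OF bg(2)] by simp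
      then show False using A T(2)[OF bg(1-3)] by simp
    qed
    have SJ: "emeasure lborel S = (\<Sum>\<beta>\<in>F. emeasure lborel (J \<beta>))"
    proof -
      have "J ` F \<subseteq> sets lborel" by (auto simp: J_def)
      from sum_emeasure[OF this disj F(1)] show ?thesis unfolding S_def by simp
    qed
    also have "\<dots> = (\<Sum>\<beta>\<in>F. ennreal (1/\<bar>\<beta>\<bar>))"
      using Fne by (intro sum.cong refl) (auto simp: J_def)
    also have "\<dots> = ennreal (\<Sum>\<beta>\<in>F. 1/\<bar>\<beta>\<bar>)" by (rule sum_ennreal) simp
    finally have SJ': "emeasure lborel S = ennreal (\<Sum>\<beta>\<in>F. 1/\<bar>\<beta>\<bar>)" .
    have "real k / M = (\<Sum>\<beta>\<in>F. 1/M)" using F(2) by simp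
    also have "\<dots> \<le> (\<Sum>\<beta>\<in>F. 1/\<bar>\<beta>\<bar>)"
      using Fne M(1) by (intro sum_mono frac_le) auto
    finally have kS: "ennreal (real k / M) \<le> emeasure lborel S" unfolding SJ' by (rule ennreal_leI)
    define g where "g = gT \<eta> a0 T"
    have Lst: "ennreal c0 \<le> Lstar a0 \<delta> b g u" if "u \<in> S" for u
    proof -
      obtain \<beta> where \<beta>: "\<beta> \<in> F" "u \<in> J \<beta>" using \<open>u \<in> S\<close> unfolding S_def by blast
      then obtain a where a: "a \<in> {a0<..<a0+\<delta>}" "\<beta> = b a" using Fne unfolding B_def by blast
      have "\<bar>u - T/\<beta>\<bar> < 1/(2*\<bar>\<beta>\<bar>)" using \<beta> unfolding J_def by auto
      then have "\<bar>\<beta>\<bar> * \<bar>u - T/\<beta>\<bar> < \<bar>\<beta>\<bar> * (1/(2*\<bar>\<beta>\<bar>))"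
        using Fne[OF \<beta>(1)] by (intro mult_strict_left_mono) auto
      moreover have "\<bar>\<beta>\<bar> * \<bar>u - T/\<beta>\<bar> = \<bar>\<beta> * u - T\<bar>"
      proof -
        have "\<beta> * (u - T/\<beta>) = \<beta> * u - T" using Fne[OF \<beta>(1)] by (simp add: field_simps)
        then show ?thesis by (metis abs_mult)
      qed
      ultimately have "\<bar>b a * u - T\<bar> < 1/2" using Fne[OF \<beta>(1)] a by simp
      then have "c0 \<le> cmod (La b a g u)"
        unfolding c0_def g_def using a \<eta>2 by (intro La_lower \<eta>0 \<eta>1) auto
      then show ?thesis unfolding Lstar_def using a
        by (intro SUP_upper2[OF a(1)] ennreal_leI)
    qed
    have pw: "ennreal (c0 powr p) * indicator S u \<le> enn_powr (Lstar a0 \<delta> b g u) p" for u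
    proof (cases "u \<in> S")
      case True
      then show ?thesis using enn_powr_ge[OF Lst[OF True]] c0 assms(5) by simp
    qed simp
    have Smeas: "S \<in> sets lborel" unfolding S_def J_def sets_lborel by (intro borel_open open_UN ballI open_greaterThanLessThan)
    define X where "X = c0 powr p * (real k / M)"
    have "ennreal X = ennreal (c0 powr p) * ennreal (real k / M)"
      unfolding X_def using M(1) by (subst ennreal_mult[symmetric]) auto
    also have "\<dots> \<le> ennreal (c0 powr p) * emeasure lborel S"
      by (intro mult_left_mono kS) auto
    also have "\<dots> = (\<integral>\<^sup>+ u. ennreal (c0 powr p) * indicator S u \<partial>lborel)"
      using nn_integral_cmult_indicator[OF Smeas] by simp
    also have "\<dots> \<le> (\<integral>\<^sup>+ u. enn_powr (Lstar a0 \<delta> b g u) p \<partial>lborel)"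
      by (intro nn_integral_mono pw)
    finally have Xle: "ennreal X \<le> (\<integral>\<^sup>+ u. enn_powr (Lstar a0 \<delta> b g u) p \<partial>lborel)" .
    have X0: "0 \<le> X" unfolding X_def using M(1) by simp
    have "(real n * H) powr p \<le> X"
    proof -
      have "(real n * H) powr p * M / c0 powr p \<le> real k" unfolding k_def by (rule of_nat_ceiling)
      then have "(real n * H) powr p * M \<le> real k * c0 powr p"
        using c0 by (simp add: pos_divide_le_eq)
      then have "(real n * H) powr p \<le> real k * c0 powr p / M"
        using M(1) by (simp add: pos_le_divide_eq)
      then show ?thesis unfolding X_def by (simp add: mult.commute)
    qed
    then have "((real n * H) powr p) powr (1/p) \<le> X powr (1/p)"
      using assms(5) by (intro powr_mono2) auto
    then have nH: "real n * H \<le> X powr (1/p)"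
      using assms(5) H0 by (simp add: powr_powr)
    have "ennreal (X powr (1/p)) \<le> Lp_norm p (Lstar a0 \<delta> b g)"
      unfolding Lp_norm_def using enn_powr_ge[OF Xle X0] assms(5) by simp
    then have "ennreal (real n * H) \<le> Lp_norm p (Lstar a0 \<delta> b g)"
      by (rule order_trans[OF ennreal_leI[OF nH]])
    then have "ennreal (real n * H) / ennreal H \<le> Lp_norm p (Lstar a0 \<delta> b g) / ennreal (Hs_norm s g)"
      unfolding g_def HT by (rule divide_right_mono_ennreal)
    moreover have "ennreal (real n * H) / ennreal H = of_nat n"
      using H0 by (simp add: divide_ennreal ennreal_of_nat_eq_real_of_nat)
    moreover have "g \<in> {g. admissible s g \<and> Hs_norm s g \<noteq> 0}"
      using gT_admissible(1,3)[OF \<eta>0 order.strict_implies_order[OF assms(4)], of a0 T] unfolding g_def by simp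
    ultimately show "\<exists>g\<in>{g. admissible s g \<and> Hs_norm s g \<noteq> 0}.
        of_nat n \<le> Lp_norm p (Lstar a0 \<delta> b g) / ennreal (Hs_norm s g)" by (metis (no_types, lifting))
  qed
qed

end
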